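(* Let $G$ be an $X-Y$ normalized graph, let $S \subseteq N(X)$, and assume that no vertex of $S$ is adjacent to a vertex of $Y$. Then there is $S' \subseteq S$ such that $|S'| \leq CE(S)$ and $K(S')=K(S)$.
   Context: $G$ is a finite undirected graph and $X,Y$ are disjoint subsets of $V(G)$; $N(C)=(\bigcup_{v\in C}N(v))\setminus C$. An $X-Y$ separator is a set $K \subseteq V(G) \setminus (X \cup Y)$ such that $G \setminus K$ has no path from $X$ to $Y$; minimal means inclusion-minimal. $G$ is $X-Y$ normalized if $N(X)$ is the only minimum-cardinality $X-Y$ separator. Let $r$ be the minimum size of an $X-Y$ separator; the excess of an $X-Y$ separator $K$ is $|K|-r$. For $S\subseteq N(X)$, the cover excess $CE(S)$ is the excess of a smallest $X-Y$ separator disjoint with $S$. An $X-Y$ separator $K$ with $K\cap S=\emptyset$ and excess $CE(S)$ is a witness of $S$. $NR(G,Y,K)$ is the set of vertices not reachable from $Y$ in $G\setminus K$; $K \geq K'$ means $NR(G,Y,K)\supseteq NR(G,Y,K')$, and $K'<K$ means $K\geq K'$ and $NR(G,Y,K)\ne NR(G,Y,K')$. A minimal $X-Y$ separator $K$ is important if there is no $X-Y$ separator $K'$ with $K<K'$ and $|K|\geq|K'|$. An important witness of $S$ is a witness of $S$ that is an important $X-Y$ separator; for $S\subseteq N(X)$ not adjacent to $Y$ it exists and is unique, denoted $K(S)$. *)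

theory Defs
  imports Main
begin

definition graph :: "'a set \<Rightarrow> ('a \<Rightarrow> 'a \<Rightarrow> bool) \<Rightarrow> bool" where
  "graph V E \<longleftrightarrow> finite V \<and> (\<forall>u v. E u v \<longrightarrow> u \<in> V \<and> v \<in> V)
     \<and> (\<forall>u v. E u v \<longrightarrow> E v u) \<and> (\<forall>v. \<not> E v v)"

definition nbhd :: "('a \<Rightarrow> 'a \<Rightarrow> bool) \<Rightarrow> 'a set \<Rightarrow> 'a set" where
  "nbhd E C = (\<Union>v\<in>C. {u. E v u}) - C"

definition reach :: "'a set \<Rightarrow> ('a \<Rightarrow> 'a \<Rightarrow> bool) \<Rightarrow> 'a set \<Rightarrow> 'a set \<Rightarrow> 'a set" where
  "reach V E K A = {v. \<exists>a \<in> (A \<inter> V) - K.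
      (a, v) \<in> {(u, w). E u w \<and> u \<notin> K \<and> w \<notin> K}\<^sup>*}"

definition separator :: "'a set \<Rightarrow> ('a \<Rightarrow> 'a \<Rightarrow> bool) \<Rightarrow> 'a set \<Rightarrow> 'a set \<Rightarrow> 'a set \<Rightarrow> bool" where
  "separator V E X Y K \<longleftrightarrow> K \<subseteq> V - (X \<union> Y) \<and> reach V E K X \<inter> Y = {}"

definition minimal_separator :: "'a set \<Rightarrow> ('a \<Rightarrow> 'a \<Rightarrow> bool) \<Rightarrow> 'a set \<Rightarrow> 'a set \<Rightarrow> 'a set \<Rightarrow> bool" where
  "minimal_separator V E X Y K \<longleftrightarrow> separator V E X Y K \<and>
     (\<forall>K'. K' \<subset> K \<longrightarrow> \<not> separator V E X Y K')"

definition min_sep_size :: "'a set \<Rightarrow> ('a \<Rightarrow> 'a \<Rightarrow> bool) \<Rightarrow> 'a set \<Rightarrow> 'a set \<Rightarrow> nat" where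
  "min_sep_size V E X Y = (LEAST n. \<exists>K. separator V E X Y K \<and> card K = n)"

definition excess :: "'a set \<Rightarrow> ('a \<Rightarrow> 'a \<Rightarrow> bool) \<Rightarrow> 'a set \<Rightarrow> 'a set \<Rightarrow> 'a set \<Rightarrow> nat" where
  "excess V E X Y K = card K - min_sep_size V E X Y"

definition normalized :: "'a set \<Rightarrow> ('a \<Rightarrow> 'a \<Rightarrow> bool) \<Rightarrow> 'a set \<Rightarrow> 'a set \<Rightarrow> bool" where
  "normalized V E X Y \<longleftrightarrow> separator V E X Y (nbhd E X) \<and>
     card (nbhd E X) = min_sep_size V E X Y \<and>
     (\<forall>K. separator V E X Y K \<and> card K = min_sep_size V E X Y \<longrightarrow> K = nbhd E X)"

definition cover_excess :: "'a set \<Rightarrow> ('a \<Rightarrow> 'a \<Rightarrow> bool) \<Rightarrow> 'a set \<Rightarrow> 'a set \<Rightarrow> 'a set \<Rightarrow> nat" where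
  "cover_excess V E X Y S =
     (LEAST n. \<exists>K. separator V E X Y K \<and> K \<inter> S = {} \<and> card K = n) - min_sep_size V E X Y"

definition witness :: "'a set \<Rightarrow> ('a \<Rightarrow> 'a \<Rightarrow> bool) \<Rightarrow> 'a set \<Rightarrow> 'a set \<Rightarrow> 'a set \<Rightarrow> 'a set \<Rightarrow> bool" where
  "witness V E X Y S K \<longleftrightarrow> separator V E X Y K \<and> K \<inter> S = {} \<and>
     excess V E X Y K = cover_excess V E X Y S"

definition NR :: "'a set \<Rightarrow> ('a \<Rightarrow> 'a \<Rightarrow> bool) \<Rightarrow> 'a set \<Rightarrow> 'a set \<Rightarrow> 'a set" where
  "NR V E Y K = V - reach V E K Y"

definition sep_ge :: "'a set \<Rightarrow> ('a \<Rightarrow> 'a \<Rightarrow> bool) \<Rightarrow> 'a set \<Rightarrow> 'a set \<Rightarrow> 'a set \<Rightarrow> bool" where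
  "sep_ge V E Y K K' \<longleftrightarrow> NR V E Y K' \<subseteq> NR V E Y K"

definition sep_less :: "'a set \<Rightarrow> ('a \<Rightarrow> 'a \<Rightarrow> bool) \<Rightarrow> 'a set \<Rightarrow> 'a set \<Rightarrow> 'a set \<Rightarrow> bool" where
  "sep_less V E Y K' K \<longleftrightarrow> sep_ge V E Y K K' \<and> NR V E Y K \<noteq> NR V E Y K'"

definition important :: "'a set \<Rightarrow> ('a \<Rightarrow> 'a \<Rightarrow> bool) \<Rightarrow> 'a set \<Rightarrow> 'a set \<Rightarrow> 'a set \<Rightarrow> bool" where
  "important V E X Y K \<longleftrightarrow> minimal_separator V E X Y K \<and>
     \<not> (\<exists>K'. separator V E X Y K' \<and> sep_less V E Y K K' \<and> card K \<ge> card K')"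

definition important_witness :: "'a set \<Rightarrow> ('a \<Rightarrow> 'a \<Rightarrow> bool) \<Rightarrow> 'a set \<Rightarrow> 'a set \<Rightarrow> 'a set \<Rightarrow> 'a set \<Rightarrow> bool" where
  "important_witness V E X Y S K \<longleftrightarrow> witness V E X Y S K \<and> important V E X Y K"

definition KS :: "'a set \<Rightarrow> ('a \<Rightarrow> 'a \<Rightarrow> bool) \<Rightarrow> 'a set \<Rightarrow> 'a set \<Rightarrow> 'a set \<Rightarrow> 'a set" where
  "KS V E X Y S = (THE K. important_witness V E X Y S K)"

end

theory Submission
  imports Defs
begin


definition rl :: "('a \<Rightarrow> 'a \<Rightarrow> bool) \<Rightarrow> 'a set \<Rightarrow> ('a \<times> 'a) set" where
  "rl E K = {(u, w). E u w \<and> u \<notin> K \<and> w \<notin> K}"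

lemma reach_alt: "reach V E K A = {v. \<exists>a \<in> (A \<inter> V) - K. (a, v) \<in> (rl E K)\<^sup>*}"
  unfolding reach_def rl_def by simp

locale gr = fixes V :: "'a set" and E assumes g: "graph V E"
begin

lemma E_V: "E u w \<Longrightarrow> u \<in> V \<and> w \<in> V" using g unfolding graph_def by blast
lemma E_sym: "E u w \<Longrightarrow> E w u" using g unfolding graph_def by blast
lemma finV: "finite V" using g unfolding graph_def by blast

lemma rl_path_V: "(a, v) \<in> (rl E K)\<^sup>* \<Longrightarrow> a \<in> V - K \<Longrightarrow> v \<in> V - K"
  by (induction rule: rtrancl_induct) (auto simp: rl_def dest: E_V)

lemma reach_VK: "v \<in> reach V E K A \<Longrightarrow> v \<in> V \<and> v \<notin> K"
  unfolding reach_alt using rl_path_V by blast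

lemma reach_fin: "finite (reach V E K A)"
  using reach_VK finV by (meson finite_subset subsetI)

lemma reach_step: "u \<in> reach V E K A \<Longrightarrow> E u w \<Longrightarrow> w \<notin> K \<Longrightarrow> w \<in> reach V E K A"
proof -
  assume u: "u \<in> reach V E K A" and e: "E u w" and w: "w \<notin> K"
  from u obtain a where a: "a \<in> A \<inter> V - K" "(a,u) \<in> (rl E K)\<^sup>*" unfolding reach_alt by blast
  have "u \<notin> K" using reach_VK u by blast
  then have "(u,w) \<in> rl E K" using e w by (simp add: rl_def)
  then have "(a,w) \<in> (rl E K)\<^sup>*" using a(2) by (rule rtrancl_into_rtrancl[rotated])
  then show ?thesis using a(1) unfolding reach_alt by blast
qed

lemma reach_closed:
  assumes "A \<inter> V - K \<subseteq> Z"
    and "\<And>u w. u \<in> Z \<Longrightarrow> E u w \<Longrightarrow> u \<notin> K \<Longrightarrow> w \<notin> K \<Longrightarrow> w \<in> Z"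
  shows "reach V E K A \<subseteq> Z"
proof
  fix v assume "v \<in> reach V E K A"
  then obtain a where a: "a \<in> A \<inter> V - K" "(a,v) \<in> (rl E K)\<^sup>*" unfolding reach_alt by blast
  from a(2) show "v \<in> Z"
    by (induction rule: rtrancl_induct) (use a(1) assms in \<open>auto simp: rl_def\<close>)
qed

lemma reach_M:
  assumes "reach V E K A \<inter> K1 = {}"
  shows "reach V E K A \<subseteq> reach V E K1 A"
proof
  fix v assume v: "v \<in> reach V E K A"
  then obtain a where a: "a \<in> A \<inter> V - K" "(a,v) \<in> (rl E K)\<^sup>*" unfolding reach_alt by blast
  have ak: "a \<notin> K1" using assms a unfolding reach_alt by blast
  from a(2) have "(a,v) \<in> (rl E K1)\<^sup>*"
  proof (induction rule: rtrancl_induct)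
    case base then show ?case by simp
  next
    case (step u w)
    have "u \<in> reach V E K A" "w \<in> reach V E K A"
      using a(1) step(1) rtrancl_into_rtrancl[OF step(1) step(2)] unfolding reach_alt by blast+
    then have "u \<notin> K1" "w \<notin> K1" using assms by blast+
    then have "(u,w) \<in> rl E K1" using step(2) by (simp add: rl_def)
    then show ?case using step(3) by (rule rtrancl_into_rtrancl[rotated])
  qed
  then show "v \<in> reach V E K1 A" using a(1) ak unfolding reach_alt by blast
qed

lemma rl_sym: "(a, v) \<in> (rl E K)\<^sup>* \<Longrightarrow> (v, a) \<in> (rl E K)\<^sup>*"
proof (induction rule: rtrancl_induct)
  case base then show ?case by simp
next
  case (step u w)
  have "(w,u) \<in> rl E K" using step(2) E_sym by (auto simp: rl_def)
  then show ?case using step(3) by (rule converse_rtrancl_into_rtrancl)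
qed

lemma sep_disj:
  assumes "separator V E X Y K"
  shows "reach V E K X \<inter> reach V E K Y = {}"
proof (rule ccontr)
  assume "reach V E K X \<inter> reach V E K Y \<noteq> {}"
  then obtain v a b where a: "a \<in> X \<inter> V - K" "(a,v) \<in> (rl E K)\<^sup>*"
    and b: "b \<in> Y \<inter> V - K" "(b,v) \<in> (rl E K)\<^sup>*" unfolding reach_alt by blast
  have "(a,b) \<in> (rl E K)\<^sup>*" using a(2) rl_sym[OF b(2)] by simp
  then have "b \<in> reach V E K X \<inter> Y" using a(1) b(1) unfolding reach_alt by blast
  then show False using assms unfolding separator_def by blast
qed

lemma X_reach: "separator V E X Y K \<Longrightarrow> X \<subseteq> V \<Longrightarrow> X \<subseteq> reach V E K X"
  unfolding separator_def reach_alt by blast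

lemma nbhd_V: "nbhd E R \<subseteq> V" unfolding nbhd_def using E_V by blast
lemma nbhd_fin: "finite (nbhd E R)" using nbhd_V finV finite_subset by blast

lemma nbhd_reach_sub: "nbhd E (reach V E K A) \<subseteq> K"
  unfolding nbhd_def using reach_step by blast

lemma reach_nbhd:
  assumes "A \<inter> V - nbhd E R \<subseteq> R"
  shows "reach V E (nbhd E R) A \<subseteq> R"
  by (rule reach_closed[OF assms]) (auto simp: nbhd_def)

lemma sep_of_nbhd:
  assumes "X \<subseteq> R" "R \<inter> Y = {}" "nbhd E R \<inter> Y = {}"
  shows "separator V E X Y (nbhd E R)"
proof -
  have "reach V E (nbhd E R) X \<subseteq> R" by (rule reach_nbhd) (use assms in blast)
  moreover have "nbhd E R \<inter> X = {}" using assms(1) unfolding nbhd_def by blast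
  ultimately show ?thesis using assms nbhd_V unfolding separator_def by blast
qed

lemma sep_nbhd_X:
  assumes "separator V E X Y K" "X \<subseteq> V"
  shows "separator V E X Y (nbhd E (reach V E K X))"
proof (rule sep_of_nbhd)
  show "X \<subseteq> reach V E K X" using X_reach assms by blast
  show "reach V E K X \<inter> Y = {}" using assms unfolding separator_def by blast
  show "nbhd E (reach V E K X) \<inter> Y = {}" using nbhd_reach_sub assms unfolding separator_def by blast
qed

lemma sep_nbhd_Y:
  assumes "separator V E X Y K" "Y \<subseteq> V"
  shows "separator V E X Y (nbhd E (reach V E K Y))"
proof -
  let ?Q = "reach V E K Y"
  have sub: "nbhd E ?Q \<subseteq> K" by (rule nbhd_reach_sub)
  have rq: "reach V E (nbhd E ?Q) Y \<subseteq> ?Q"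
    by (rule reach_nbhd) (use assms sub in \<open>auto simp: separator_def reach_alt\<close>)
  have "reach V E (nbhd E ?Q) X \<inter> Y = {}"
  proof (rule ccontr)
    assume "reach V E (nbhd E ?Q) X \<inter> Y \<noteq> {}"
    then obtain y a where a: "a \<in> X \<inter> V - nbhd E ?Q" "(a,y) \<in> (rl E (nbhd E ?Q))\<^sup>*" and y: "y \<in> Y"
      unfolding reach_alt by blast
    have yV: "y \<in> V - nbhd E ?Q" using rl_path_V[OF a(2)] a(1) by blast
    have "a \<in> reach V E (nbhd E ?Q) Y" using rl_sym[OF a(2)] y yV unfolding reach_alt by blast
    then have "a \<in> ?Q" using rq by blast
    moreover have "a \<in> reach V E K X" using a(1) assms(1) unfolding separator_def reach_alt by blast
    ultimately show False using sep_disj[OF assms(1)] by blast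
  qed
  then show ?thesis using sub assms(1) unfolding separator_def by blast
qed

lemma min_X: assumes "minimal_separator V E X Y K" "X \<subseteq> V" shows "K = nbhd E (reach V E K X)"
proof -
  have s: "separator V E X Y K" and m: "\<And>K'. K' \<subset> K \<Longrightarrow> \<not> separator V E X Y K'"
    using assms(1) unfolding minimal_separator_def by auto
  have "separator V E X Y (nbhd E (reach V E K X))" by (rule sep_nbhd_X[OF s assms(2)])
  moreover have "nbhd E (reach V E K X) \<subseteq> K" by (rule nbhd_reach_sub)
  ultimately show ?thesis using m by (metis psubsetI)
qed

lemma min_Y: assumes "minimal_separator V E X Y K" "Y \<subseteq> V" shows "K = nbhd E (reach V E K Y)"
proof -
  have s: "separator V E X Y K" and m: "\<And>K'. K' \<subset> K \<Longrightarrow> \<not> separator V E X Y K'"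
    using assms(1) unfolding minimal_separator_def by auto
  have "separator V E X Y (nbhd E (reach V E K Y))" by (rule sep_nbhd_Y[OF s assms(2)])
  moreover have "nbhd E (reach V E K Y) \<subseteq> K" by (rule nbhd_reach_sub)
  ultimately show ?thesis using m by (metis psubsetI)
qed

lemma nbhd_Un_sub: "nbhd E (A \<union> B) \<subseteq> nbhd E A \<union> nbhd E B" unfolding nbhd_def by blast
lemma nbhd_Int_sub: "nbhd E (A \<inter> B) \<subseteq> nbhd E A \<union> nbhd E B" unfolding nbhd_def by blast

lemma submod: "card (nbhd E (A \<union> B)) + card (nbhd E (A \<inter> B)) \<le> card (nbhd E A) + card (nbhd E B)"
proof -
  let ?P = "(nbhd E A - B) \<union> (nbhd E B - A)"
  let ?Q = "(nbhd E B \<inter> A) \<union> (nbhd E A \<inter> B) \<union> (nbhd E A \<inter> nbhd E B)"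
  have fA: "finite (nbhd E A)" and fB: "finite (nbhd E B)" by (rule nbhd_fin)+
  have s1: "nbhd E (A \<union> B) \<subseteq> ?P" unfolding nbhd_def by blast
  have s2: "nbhd E (A \<inter> B) \<subseteq> ?Q" unfolding nbhd_def by blast
  have fP: "finite ?P" and fQ: "finite ?Q" using fA fB by auto
  have "card (nbhd E (A \<union> B)) \<le> card ?P" by (rule card_mono[OF fP s1])
  moreover have "card (nbhd E (A \<inter> B)) \<le> card ?Q" by (rule card_mono[OF fQ s2])
  moreover have "card ?P + card ?Q = card (?P \<union> ?Q) + card (?P \<inter> ?Q)"
    using card_Un_Int[OF fP fQ] .
  moreover have "?P \<union> ?Q \<subseteq> nbhd E A \<union> nbhd E B" by blast
  moreover have "?P \<inter> ?Q \<subseteq> nbhd E A \<inter> nbhd E B" unfolding nbhd_def by blast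
  moreover have "card (nbhd E A \<union> nbhd E B) + card (nbhd E A \<inter> nbhd E B) = card (nbhd E A) + card (nbhd E B)"
    using card_Un_Int[OF fA fB] by simp
  moreover have "card (?P \<union> ?Q) \<le> card (nbhd E A \<union> nbhd E B)"
    using card_mono fA fB \<open>?P \<union> ?Q \<subseteq> _\<close> by (meson finite_UnI)
  moreover have "card (?P \<inter> ?Q) \<le> card (nbhd E A \<inter> nbhd E B)"
    using card_mono fA \<open>?P \<inter> ?Q \<subseteq> _\<close> by (meson finite_Int)
  ultimately show ?thesis by linarith
qed

end



definition fT :: "'a set \<Rightarrow> ('a \<Rightarrow> 'a \<Rightarrow> bool) \<Rightarrow> 'a set \<Rightarrow> 'a set \<Rightarrow> 'a set \<Rightarrow> nat" where
  "fT V E X Y T = (LEAST n. \<exists>K. separator V E X Y K \<and> K \<inter> T = {} \<and> card K = n)"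

locale st = gr V E for V :: "'a set" and E +
  fixes X Y
  assumes XV: "X \<subseteq> V" and YV: "Y \<subseteq> V" and XY: "X \<inter> Y = {}" and nor: "normalized V E X Y"
begin

definition adm where "adm T \<longleftrightarrow> T \<subseteq> nbhd E X \<and> (\<forall>s\<in>T. \<forall>y\<in>Y. \<not> E s y)"

abbreviation f where "f T \<equiv> fT V E X Y T"

lemma NX_sep: "separator V E X Y (nbhd E X)" using nor unfolding normalized_def by blast

lemma ex_sep: assumes "adm T" shows "\<exists>K. separator V E X Y K \<and> K \<inter> T = {}"
proof -
  have TN: "T \<subseteq> nbhd E X" and TY: "\<forall>s\<in>T. \<forall>y\<in>Y. \<not> E s y" using assms unfolding adm_def by auto
  have NY: "nbhd E X \<inter> Y = {}" using NX_sep unfolding separator_def by blast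
  have "separator V E X Y (nbhd E (X \<union> T))"
  proof (rule sep_of_nbhd)
    show "X \<subseteq> X \<union> T" by blast
    show "(X \<union> T) \<inter> Y = {}" using XY TN NY by blast
    show "nbhd E (X \<union> T) \<inter> Y = {}"
    proof -
      { fix v assume v: "v \<in> nbhd E (X \<union> T)" "v \<in> Y"
        then obtain u where u: "u \<in> X \<union> T" "E u v" "v \<notin> X \<union> T" unfolding nbhd_def by blast
        have False
        proof (cases "u \<in> X")
          case True then have "v \<in> nbhd E X" using u unfolding nbhd_def by blast
          then show False using NY v by blast
        next
          case False then show False using u TY v by blast
        qed }
      then show ?thesis by blast
    qed
  qed
  moreover have "nbhd E (X \<union> T) \<inter> T = {}" unfolding nbhd_def by blast
  ultimately show ?thesis by blast
qed

lemma f_achieved: assumes "adm T"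
  shows "\<exists>K. separator V E X Y K \<and> K \<inter> T = {} \<and> card K = f T"
proof -
  obtain K where "separator V E X Y K \<and> K \<inter> T = {}" using ex_sep[OF assms] by blast
  then have "\<exists>n K. separator V E X Y K \<and> K \<inter> T = {} \<and> card K = n" by blast
  then show ?thesis unfolding fT_def by (rule LeastI_ex)
qed

lemma f_le: "separator V E X Y K \<Longrightarrow> K \<inter> T = {} \<Longrightarrow> f T \<le> card K"
  unfolding fT_def by (rule Least_le) blast

lemma f0: "f {} = min_sep_size V E X Y"
  unfolding fT_def min_sep_size_def by simp

lemma adm_sub: "adm T \<Longrightarrow> U \<subseteq> T \<Longrightarrow> adm U" unfolding adm_def by blast

lemma f_mono: assumes "adm T'" "T \<subseteq> T'" shows "f T \<le> f T'"
proof -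
  obtain K where "separator V E X Y K" "K \<inter> T' = {}" "card K = f T'" using f_achieved[OF assms(1)] by blast
  then show ?thesis using f_le[of K T] assms(2) by auto
qed

lemma adm_reach: assumes "adm T" "separator V E X Y K" "K \<inter> T = {}" shows "T \<subseteq> reach V E K X"
proof
  fix t assume t: "t \<in> T"
  then obtain x where x: "x \<in> X" "E x t" using assms(1) unfolding adm_def nbhd_def by blast
  have "x \<in> reach V E K X" using X_reach[OF assms(2) XV] x by blast
  then show "t \<in> reach V E K X" using reach_step x t assms(3) by blast
qed

lemma combine:
  assumes s1: "separator V E X Y K1" and s2: "separator V E X Y K2"
  shows "separator V E X Y (nbhd E (reach V E K1 X \<union> reach V E K2 X))"
    and "separator V E X Y (nbhd E (reach V E K1 X \<inter> reach V E K2 X))"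
proof -
  let ?R1 = "reach V E K1 X" and ?R2 = "reach V E K2 X"
  have n1: "nbhd E ?R1 \<subseteq> K1" and n2: "nbhd E ?R2 \<subseteq> K2" by (rule nbhd_reach_sub)+
  have y1: "K1 \<inter> Y = {}" "?R1 \<inter> Y = {}" using s1 unfolding separator_def by blast+
  have y2: "K2 \<inter> Y = {}" "?R2 \<inter> Y = {}" using s2 unfolding separator_def by blast+
  have x1: "X \<subseteq> ?R1" and x2: "X \<subseteq> ?R2" using X_reach XV s1 s2 by blast+
  show "separator V E X Y (nbhd E (?R1 \<union> ?R2))"
    by (rule sep_of_nbhd) (use x1 y1 y2 n1 n2 nbhd_Un_sub[of ?R1 ?R2] in blast)+
  show "separator V E X Y (nbhd E (?R1 \<inter> ?R2))"
    by (rule sep_of_nbhd) (use x1 x2 y1 y2 n1 n2 nbhd_Int_sub[of ?R1 ?R2] in blast)+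
qed

lemma f_submod: assumes "adm A" "adm B" shows "f (A \<union> B) + f (A \<inter> B) \<le> f A + f B"
proof -
  obtain KA where a: "separator V E X Y KA" "KA \<inter> A = {}" "card KA = f A" using f_achieved[OF assms(1)] by blast
  obtain KB where b: "separator V E X Y KB" "KB \<inter> B = {}" "card KB = f B" using f_achieved[OF assms(2)] by blast
  let ?R1 = "reach V E KA X" and ?R2 = "reach V E KB X"
  have A1: "A \<subseteq> ?R1" using adm_reach assms(1) a by blast
  have B2: "B \<subseteq> ?R2" using adm_reach assms(2) b by blast
  have "f (A \<union> B) \<le> card (nbhd E (?R1 \<union> ?R2))"
    by (rule f_le[OF combine(1)[OF a(1) b(1)]]) (use A1 B2 in \<open>auto simp: nbhd_def\<close>)
  moreover have "f (A \<inter> B) \<le> card (nbhd E (?R1 \<inter> ?R2))"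
    by (rule f_le[OF combine(2)[OF a(1) b(1)]]) (use A1 B2 in \<open>auto simp: nbhd_def\<close>)
  moreover have "card (nbhd E ?R1) \<le> card KA"
    using a(1) card_mono nbhd_reach_sub finV unfolding separator_def by (metis finite_subset Diff_subset subset_trans)
  moreover have "card (nbhd E ?R2) \<le> card KB"
    using b(1) card_mono nbhd_reach_sub finV unfolding separator_def by (metis finite_subset Diff_subset subset_trans)
  ultimately show ?thesis using submod[of ?R1 ?R2] a(3) b(3) by linarith
qed

lemma count:
  assumes "adm S'" "\<forall>s\<in>S'. f (S' - {s}) < f S'"
  shows "card S' + f {} \<le> f S'"
proof -
  have fin: "finite S'" using assms(1) nbhd_fin finite_subset unfolding adm_def by blast
  have "\<And>U. U \<subseteq> S' \<Longrightarrow> card U + f {} \<le> f U"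
  proof -
    fix U assume US: "U \<subseteq> S'"
    have "finite U" using US fin finite_subset by blast
    then show "card U + f {} \<le> f U" using US
    proof (induction U rule: finite_induct)
      case empty then show ?case by simp
    next
      case (insert s W)
      have sS: "s \<in> S'" and WS: "W \<subseteq> S'" using insert by auto
      have u: "insert s W \<union> (S' - {s}) = S'" using sS WS by blast
      have i: "insert s W \<inter> (S' - {s}) = W" using WS insert(2) by blast
      have "f S' + f W \<le> f (insert s W) + f (S' - {s})"
        using f_submod[of "insert s W" "S' - {s}"] adm_sub[OF assms(1)] sS WS u i
        by (metis Diff_subset insert.prems)
      moreover have "f (S' - {s}) < f S'" using assms(2) sS by blast
      moreover have "card W + f {} \<le> f W" using insert WS by blast
      ultimately show ?case using insert(1,2) by simp
    qed
  qed
  then show ?thesis by blast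
qed

end



context st begin

lemma reach_sub_V: "reach V E K A \<subseteq> V" using reach_VK by blast

lemma witness_card: assumes "adm T" "witness V E X Y T K" shows "card K = f T"
proof -
  have s: "separator V E X Y K" "K \<inter> T = {}" and ex: "excess V E X Y K = cover_excess V E X Y T"
    using assms(2) unfolding witness_def by auto
  have "card K - f {} = f T - f {}" using ex unfolding excess_def cover_excess_def f0[symmetric]
    by (simp add: fT_def)
  moreover have "f {} \<le> f T" using f_mono[OF assms(1)] by blast
  moreover have "f T \<le> card K" using f_le s by blast
  ultimately show ?thesis by linarith
qed

lemma witness_intro: assumes "separator V E X Y K" "K \<inter> T = {}" "card K = f T"
  shows "witness V E X Y T K"
  using assms unfolding witness_def excess_def cover_excess_def by (simp add: fT_def)

lemma ex_iw: assumes "adm T" shows "\<exists>K. important_witness V E X Y T K"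
proof -
  let ?P = "\<lambda>K. separator V E X Y K \<and> K \<inter> T = {} \<and> card K = f T"
  obtain K0 where "?P K0" using f_achieved[OF assms] by blast
  moreover have "\<forall>K. ?P K \<longrightarrow> card (NR V E Y K) < Suc (card V)"
    using finV by (auto simp: NR_def intro!: le_imp_less_Suc card_mono)
  ultimately obtain K where K: "?P K" and mx: "\<forall>K'. ?P K' \<longrightarrow> card (NR V E Y K') \<le> card (NR V E Y K)"
    using ex_has_greatest_nat[of ?P K0 "\<lambda>K. card (NR V E Y K)" "Suc (card V)"] by blast
  have finK: "\<And>K. separator V E X Y K \<Longrightarrow> finite K"
    using finV unfolding separator_def by (meson Diff_subset finite_subset subset_trans)
  have wit: "witness V E X Y T K" using K witness_intro by blast
  have minl: "minimal_separator V E X Y K"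
    unfolding minimal_separator_def
  proof (intro conjI allI impI)
    show "separator V E X Y K" using K by blast
  next
    fix K' assume ps: "K' \<subset> K"
    show "\<not> separator V E X Y K'"
    proof
      assume sK': "separator V E X Y K'"
      have "f T \<le> card K'" using f_le[OF sK'] ps K by blast
      moreover have "card K' < card K" using psubset_card_mono[OF finK ps] K by blast
      ultimately show False using K by linarith
    qed
  qed
  have imp: "\<not> (\<exists>K'. separator V E X Y K' \<and> sep_less V E Y K K' \<and> card K \<ge> card K')"
  proof
    assume "\<exists>K'. separator V E X Y K' \<and> sep_less V E Y K K' \<and> card K \<ge> card K'"
    then obtain K' where sK': "separator V E X Y K'" and sl: "sep_less V E Y K K'" and cK': "card K' \<le> card K"
      by blast
    let ?Q = "reach V E K Y" and ?R = "reach V E K X" and ?Q' = "reach V E K' Y"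
    have NRsub: "NR V E Y K \<subseteq> NR V E Y K'" and NRne: "NR V E Y K' \<noteq> NR V E Y K"
      using sl unfolding sep_less_def sep_ge_def by auto
    have Q'Q: "?Q' \<subseteq> ?Q" using NRsub reach_sub_V[of K' Y] reach_sub_V[of K Y] unfolding NR_def by blast
    have TR: "T \<subseteq> ?R" using adm_reach[OF assms] K by blast
    have RQ: "?R \<inter> ?Q = {}" using sep_disj K by blast
    let ?K2 = "K' - T"
    have r2: "reach V E ?K2 Y \<subseteq> ?Q'"
    proof (rule reach_closed)
      show "Y \<inter> V - ?K2 \<subseteq> ?Q'" using sK' unfolding separator_def reach_alt by blast
    next
      fix u w assume u: "u \<in> ?Q'" and e: "E u w" and "u \<notin> ?K2" and w: "w \<notin> ?K2"
      show "w \<in> ?Q'"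
      proof (cases "w \<in> K'")
        case False then show ?thesis using reach_step u e by blast
      next
        case True
        then have "w \<in> ?R" using w TR by blast
        moreover have "u \<notin> K" using Q'Q u reach_VK by blast
        ultimately have "u \<in> ?R" using reach_step E_sym[OF e] by blast
        then show ?thesis using RQ Q'Q u by blast
      qed
    qed
    have sK2: "separator V E X Y ?K2"
      unfolding separator_def
    proof
      show "?K2 \<subseteq> V - (X \<union> Y)" using sK' unfolding separator_def by blast
      show "reach V E ?K2 X \<inter> Y = {}"
      proof (rule ccontr)
        assume "reach V E ?K2 X \<inter> Y \<noteq> {}"
        then obtain y a where a: "a \<in> X \<inter> V - ?K2" "(a,y) \<in> (rl E ?K2)\<^sup>*" and y: "y \<in> Y"
          unfolding reach_alt by blast
        have yV: "y \<in> V - ?K2" using rl_path_V[OF a(2)] a(1) by blast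
        have "a \<in> reach V E ?K2 Y" using rl_sym[OF a(2)] y yV unfolding reach_alt by blast
        then have "a \<in> ?Q'" using r2 by blast
        moreover have "a \<in> reach V E K' X" using a(1) sK' unfolding separator_def reach_alt by blast
        ultimately show False using sep_disj[OF sK'] by blast
      qed
    qed
    have "f T \<le> card ?K2" using f_le[OF sK2] by blast
    moreover have "card ?K2 \<le> card K'" using finK[OF sK'] by (simp add: card_mono)
    ultimately have "card ?K2 = card K'" using cK' K by linarith
    then have "?K2 = K'" using finK[OF sK'] by (metis Diff_subset card_subset_eq)
    then have PK': "?P K'" using sK' cK' K \<open>f T \<le> card ?K2\<close> by auto
    have "NR V E Y K \<subset> NR V E Y K'" using NRsub NRne by blast
    then have "card (NR V E Y K) < card (NR V E Y K')"
      by (rule psubset_card_mono[rotated]) (use finV in \<open>simp add: NR_def\<close>)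
    then show False using mx PK' by fastforce
  qed
  show ?thesis using wit minl imp unfolding important_witness_def important_def by blast
qed

lemma further:
  assumes s1: "separator V E X Y K1" and m1: "minimal_separator V E X Y K1"
    and s2: "separator V E X Y K2"
  shows "sep_ge V E Y (nbhd E (reach V E K1 X \<union> reach V E K2 X)) K1"
proof -
  let ?R1 = "reach V E K1 X" and ?R2 = "reach V E K2 X"
  let ?KU = "nbhd E (?R1 \<union> ?R2)"
  have sU: "separator V E X Y ?KU" by (rule combine(1)[OF s1 s2])
  have KUR: "?KU \<inter> (?R1 \<union> ?R2) = {}" unfolding nbhd_def by blast
  have "?R1 \<subseteq> reach V E ?KU X" by (rule reach_M) (use KUR in blast)
  moreover have "?R2 \<subseteq> reach V E ?KU X" by (rule reach_M) (use KUR in blast)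
  ultimately have RU: "?R1 \<union> ?R2 \<subseteq> reach V E ?KU X" by blast
  have K1eq: "K1 = nbhd E ?R1" by (rule min_X[OF m1 XV])
  have K1sub: "K1 \<subseteq> ?R1 \<union> ?R2 \<union> ?KU" using K1eq unfolding nbhd_def by blast
  have "reach V E ?KU Y \<inter> K1 = {}"
    using K1sub RU sep_disj[OF sU] reach_VK[of _ ?KU Y] by blast
  then have "reach V E ?KU Y \<subseteq> reach V E K1 Y" by (rule reach_M)
  then show ?thesis unfolding sep_ge_def NR_def by blast
qed

lemma iw_unique: assumes T: "adm T" and i1: "important_witness V E X Y T K1"
  and i2: "important_witness V E X Y T K2" shows "K1 = K2"
proof -
  have w1: "witness V E X Y T K1" and im1: "important V E X Y K1" using i1 unfolding important_witness_def by auto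
  have w2: "witness V E X Y T K2" and im2: "important V E X Y K2" using i2 unfolding important_witness_def by auto
  have c1: "card K1 = f T" and c2: "card K2 = f T" using witness_card T w1 w2 by blast+
  have s1: "separator V E X Y K1" "K1 \<inter> T = {}" using w1 unfolding witness_def by auto
  have s2: "separator V E X Y K2" "K2 \<inter> T = {}" using w2 unfolding witness_def by auto
  have m1: "minimal_separator V E X Y K1" and nb1: "\<And>K'. separator V E X Y K' \<Longrightarrow> sep_less V E Y K1 K' \<Longrightarrow> \<not> card K1 \<ge> card K'"
    using im1 unfolding important_def by auto
  have m2: "minimal_separator V E X Y K2" and nb2: "\<And>K'. separator V E X Y K' \<Longrightarrow> sep_less V E Y K2 K' \<Longrightarrow> \<not> card K2 \<ge> card K'"
    using im2 unfolding important_def by auto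
  let ?R1 = "reach V E K1 X" and ?R2 = "reach V E K2 X"
  let ?KU = "nbhd E (?R1 \<union> ?R2)" and ?KI = "nbhd E (?R1 \<inter> ?R2)"
  have sU: "separator V E X Y ?KU" by (rule combine(1)[OF s1(1) s2(1)])
  have sI: "separator V E X Y ?KI" by (rule combine(2)[OF s1(1) s2(1)])
  have T1: "T \<subseteq> ?R1" using adm_reach[OF T s1] .
  have T2: "T \<subseteq> ?R2" using adm_reach[OF T s2] .
  have "f T \<le> card ?KU" by (rule f_le[OF sU]) (use T1 in \<open>auto simp: nbhd_def\<close>)
  have "f T \<le> card ?KI" by (rule f_le[OF sI]) (use T1 T2 in \<open>auto simp: nbhd_def\<close>)
  have e1: "K1 = nbhd E ?R1" by (rule min_X[OF m1 XV])
  have e2: "K2 = nbhd E ?R2" by (rule min_X[OF m2 XV])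
  have "card ?KU + card ?KI \<le> card K1 + card K2" using submod[of ?R1 ?R2] e1 e2 by simp
  then have cU: "card ?KU \<le> f T" using \<open>f T \<le> card ?KI\<close> c1 c2 by linarith
  have g1: "sep_ge V E Y ?KU K1" by (rule further[OF s1(1) m1 s2(1)])
  have g2: "sep_ge V E Y ?KU K2" using further[OF s2(1) m2 s1(1)] by (simp add: Un_commute)
  have "NR V E Y ?KU = NR V E Y K1" using nb1[OF sU] g1 cU c1 unfolding sep_less_def by auto
  moreover have "NR V E Y ?KU = NR V E Y K2" using nb2[OF sU] g2 cU c2 unfolding sep_less_def by auto
  ultimately have "NR V E Y K1 = NR V E Y K2" by simp
  then have "reach V E K1 Y = reach V E K2 Y"
    using reach_sub_V[of K1 Y] reach_sub_V[of K2 Y] unfolding NR_def by blast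
  then show ?thesis using min_Y[OF m1 YV] min_Y[OF m2 YV] by simp
qed

lemma KS_eq: assumes "adm T" "important_witness V E X Y T K" shows "KS V E X Y T = K"
  unfolding KS_def using assms iw_unique by (metis the_equality)

end

theorem lemma4:
  fixes V X Y S :: "'a set" and E :: "'a \<Rightarrow> 'a \<Rightarrow> bool"
  assumes "graph V E"
    and "X \<subseteq> V" and "Y \<subseteq> V" and "X \<inter> Y = {}"
    and "normalized V E X Y"
    and "S \<subseteq> nbhd E X"
    and "\<forall>s\<in>S. \<forall>y\<in>Y. \<not> E s y"
  shows "\<exists>S' \<subseteq> S. card S' \<le> cover_excess V E X Y S \<and> KS V E X Y S' = KS V E X Y S"
proof -
  interpret st V E X Y using assms(1-5) by (simp add: st_def gr_def st_axioms_def)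
  have admS: "adm S" using assms(6,7) unfolding adm_def by blast
  obtain K where K: "important_witness V E X Y S K" using ex_iw[OF admS] by blast
  have KSS: "KS V E X Y S = K" by (rule KS_eq[OF admS K])
  let ?P = "\<lambda>U. U \<subseteq> S \<and> f U = f S"
  obtain S' where S': "?P S'" and lst: "\<forall>U. ?P U \<longrightarrow> card S' \<le> card U"
    using ex_has_least_nat[of ?P S card] by blast
  have admS': "adm S'" using adm_sub[OF admS] S' by blast
  have finS': "finite S'" using admS' nbhd_fin finite_subset unfolding adm_def by blast
  have strict: "\<forall>s\<in>S'. f (S' - {s}) < f S'"
  proof
    fix s assume s: "s \<in> S'"
    have "f (S' - {s}) \<le> f S'" using f_mono[OF admS'] by blast
    moreover have "f (S' - {s}) \<noteq> f S'"
    proof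
      assume "f (S' - {s}) = f S'"
      then have "?P (S' - {s})" using S' by auto
      then have "card S' \<le> card (S' - {s})" using lst by blast
      moreover have "card (S' - {s}) < card S'" using finS' s by (meson card_Diff1_less)
      ultimately show False by linarith
    qed
    ultimately show "f (S' - {s}) < f S'" by linarith
  qed
  have cnt: "card S' + f {} \<le> f S'" using count[OF admS' strict] .
  have ce: "cover_excess V E X Y S = f S - f {}" unfolding cover_excess_def f0[symmetric] by (simp add: fT_def)
  have "card S' \<le> cover_excess V E X Y S" using cnt S' ce by linarith
  moreover have "important_witness V E X Y S' K"
  proof -
    have w: "witness V E X Y S K" and im: "important V E X Y K" using K unfolding important_witness_def by auto
    have "card K = f S" using witness_card[OF admS w] .
    moreover have "separator V E X Y K" "K \<inter> S' = {}" using w S' unfolding witness_def by auto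
    ultimately have "witness V E X Y S' K" using witness_intro S' by simp
    then show ?thesis using im unfolding important_witness_def by blast
  qed
  then have "KS V E X Y S' = K" by (rule KS_eq[OF admS'])
  ultimately show ?thesis using S' KSS by blast
qed


end
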